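(* Let $\beta\ge1$ and consider the GBDF3 coefficients $(a_0,a_1,a_2)=\big(\tfrac{3\beta^2+6\beta+2}{6},\tfrac{-6\beta^2-6\beta+5}{6},\tfrac{3\beta^2-1}{6}\big)$, $(b_0,\dots,b_3)=\big(\tfrac{\beta^2+\beta}{2},1-\beta^2,\tfrac{\beta^2-\beta}{2},0\big)$, $(c_0,c_1,c_2)=\big(\tfrac{\beta^2+3\beta+2}{2},-2\beta-\beta^2,\tfrac{\beta^2+\beta}{2}\big)$. Then $$\sigma_{\mathrm{F}}=1,\quad\sigma_{\mathrm{E}}=\frac{6\beta^2+12\beta+3}{6\beta^2+6\beta-2},\quad\frac{6\beta^2-4}{6\beta^2+6\beta-2}\le\lambda_{\mathrm{I}}\le\frac{6\beta^2-3}{6\beta^2+6\beta-2},$$ so that $\dfrac{6\beta^2-4}{6\beta^2+12\beta+3}\le\mathfrak{I}_{\mathrm{IE}}\le\dfrac{6\beta^2-3}{6\beta^2+12\beta+3}$.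
   Context: For coefficient vectors $(a_j)_{j=0}^{\mathrm{k}-1}$, $(b_j)_{j=0}^{\mathrm{k}}$, $(c_j)_{j=0}^{\mathrm{k}-1}$ define $a(\theta)=\sum_j a_je^{\imath j\theta}$, $b(\theta)=\sum_j b_je^{\imath j\theta}$, $c(\theta)=\sum_jc_je^{\imath j\theta}$ and $\sigma_{\mathrm{F}}=\max_{\theta\in[0,2\pi)}|1/a(\theta)|$, $\sigma_{\mathrm{E}}=\max_{\theta\in[0,2\pi)}|c(\theta)/a(\theta)|$, $\lambda_{\mathrm{I}}=\min_{\theta\in[0,2\pi)}\Re[b(\theta)/a(\theta)]$, $\mathfrak{I}_{\mathrm{IE}}=\lambda_{\mathrm{I}}/\sigma_{\mathrm{E}}$. Here $\mathrm{k}=3$. *)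

theory Defs
  imports "HOL-Analysis.Analysis"
begin

definition trig_poly :: "nat \<Rightarrow> (nat \<Rightarrow> real) \<Rightarrow> real \<Rightarrow> complex" where
  "trig_poly n p \<theta> = (\<Sum>j<n. complex_of_real (p j) * exp (\<i> * of_nat j * complex_of_real \<theta>))"

text \<open>With k steps: a, c have k coefficients (indices 0..k-1), b has k+1 (indices 0..k).\<close>
definition sigma_F :: "nat \<Rightarrow> (nat \<Rightarrow> real) \<Rightarrow> real" where
  "sigma_F k a = (SUP \<theta>\<in>{0..<2*pi}. cmod (1 / trig_poly k a \<theta>))"

definition sigma_E :: "nat \<Rightarrow> (nat \<Rightarrow> real) \<Rightarrow> (nat \<Rightarrow> real) \<Rightarrow> real" where
  "sigma_E k a c = (SUP \<theta>\<in>{0..<2*pi}. cmod (trig_poly k c \<theta> / trig_poly k a \<theta>))"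

definition lambda_I :: "nat \<Rightarrow> (nat \<Rightarrow> real) \<Rightarrow> (nat \<Rightarrow> real) \<Rightarrow> real" where
  "lambda_I k a b = (INF \<theta>\<in>{0..<2*pi}. Re (trig_poly (Suc k) b \<theta> / trig_poly k a \<theta>))"

definition I_IE :: "nat \<Rightarrow> (nat \<Rightarrow> real) \<Rightarrow> (nat \<Rightarrow> real) \<Rightarrow> (nat \<Rightarrow> real) \<Rightarrow> real" where
  "I_IE k a b c = lambda_I k a b / sigma_E k a c"

definition gbdf3_a :: "real \<Rightarrow> nat \<Rightarrow> real" where
  "gbdf3_a \<beta> j = (if j = 0 then (3*\<beta>^2 + 6*\<beta> + 2)/6
                  else if j = 1 then (-6*\<beta>^2 - 6*\<beta> + 5)/6
                  else if j = 2 then (3*\<beta>^2 - 1)/6 else 0)"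

definition gbdf3_b :: "real \<Rightarrow> nat \<Rightarrow> real" where
  "gbdf3_b \<beta> j = (if j = 0 then (\<beta>^2 + \<beta>)/2
                  else if j = 1 then 1 - \<beta>^2
                  else if j = 2 then (\<beta>^2 - \<beta>)/2 else 0)"

definition gbdf3_c :: "real \<Rightarrow> nat \<Rightarrow> real" where
  "gbdf3_c \<beta> j = (if j = 0 then (\<beta>^2 + 3*\<beta> + 2)/2
                  else if j = 1 then -2*\<beta> - \<beta>^2
                  else if j = 2 then (\<beta>^2 + \<beta>)/2 else 0)"

end

theory Submission
  imports Defs
begin

definition crf :: "(nat \<Rightarrow> real) \<Rightarrow> (nat \<Rightarrow> real) \<Rightarrow> real \<Rightarrow> real" where
  "crf p q x = (p 0*q 0+p 1*q 1+p 2*q 2) + (p 0*q 1+p 1*q 0+p 1*q 2+p 2*q 1)*x + (p 0*q 2+p 2*q 0)*(2*x^2-1)"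

lemma trig3: "trig_poly 3 p t = Complex (p 0 + p 1 * cos t + p 2 * cos (2*t)) (p 1 * sin t + p 2 * sin (2*t))"
proof -
  have e: "exp (\<i> * of_nat j * complex_of_real t) = cis (real j * t)" for j
    by (simp add: cis_conv_exp mult.commute mult.left_commute)
  show ?thesis unfolding trig_poly_def
    by (simp add: numeral_3_eq_3 numeral_2_eq_2 lessThan_Suc e complex_eq_iff cis.sel)
qed

lemma trig4: "p 3 = 0 \<Longrightarrow> trig_poly (Suc 3) p t = trig_poly 3 p t"
  unfolding trig_poly_def by (subst sum.lessThan_Suc) simp

lemma cr: "Re (trig_poly 3 p t) * Re (trig_poly 3 q t) + Im (trig_poly 3 p t) * Im (trig_poly 3 q t) = crf p q (cos t)"
proof -
  have s: "sin t ^ 2 = 1 - cos t ^ 2" by (simp add: sin_squared_eq)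
  show ?thesis unfolding trig3 crf_def
    unfolding complex.sel cos_double sin_double using s by algebra
qed

lemma atpi: "trig_poly 3 p pi = complex_of_real (p 0 - p 1 + p 2)"
  unfolding trig3 by (simp add: complex_eq_iff)

lemma gv:
  "gbdf3_a \<beta> 0 = (3*\<beta>^2 + 6*\<beta> + 2)/6" "gbdf3_a \<beta> 1 = (-6*\<beta>^2 - 6*\<beta> + 5)/6" "gbdf3_a \<beta> 2 = (3*\<beta>^2 - 1)/6"
  "gbdf3_b \<beta> 0 = (\<beta>^2 + \<beta>)/2" "gbdf3_b \<beta> 1 = 1 - \<beta>^2" "gbdf3_b \<beta> 2 = (\<beta>^2 - \<beta>)/2" "gbdf3_b \<beta> 3 = 0"
  "gbdf3_c \<beta> 0 = (\<beta>^2 + 3*\<beta> + 2)/2" "gbdf3_c \<beta> 1 = -2*\<beta> - \<beta>^2" "gbdf3_c \<beta> 2 = (\<beta>^2 + \<beta>)/2"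
  by (simp_all add: gbdf3_a_def gbdf3_b_def gbdf3_c_def)

lemma fact1:
  assumes b: "(\<beta>::real) \<ge> 1" and x: "-1 \<le> x" "x \<le> 1"
  shows "crf (gbdf3_a \<beta>) (gbdf3_a \<beta>) x \<ge> 1"
proof -
  define Q where "Q = \<beta>^4+2*\<beta>^3+\<beta>^2/3-2*\<beta>/3"
  have id: "crf (gbdf3_a \<beta>) (gbdf3_a \<beta>) x - 1 = (1-x)*((Q-1/18) - x*(Q-2/9))"
    unfolding crf_def gv Q_def by algebra
  have "\<beta>^2 \<ge> 1" "\<beta>^3 \<ge> 1" "\<beta>^4 \<ge> 1" using b by (simp_all add: one_le_power)
  moreover have "(\<beta>-1)^2 \<ge> 0" by simp
  ultimately have Q: "Q \<ge> 2/9" unfolding Q_def by (simp add: power2_eq_square algebra_simps) 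
  have "x*(Q-2/9) \<le> 1*(Q-2/9)" using Q x by (intro mult_right_mono) auto
  hence "(Q-1/18) - x*(Q-2/9) \<ge> 0" by simp
  hence "(1-x)*((Q-1/18) - x*(Q-2/9)) \<ge> 0" using x by simp
  thus ?thesis using id by simp
qed


lemma fact2:
  assumes b: "(\<beta>::real) \<ge> 1" and x: "-1 \<le> x" "x \<le> 1"
  shows "(6*\<beta>^2+6*\<beta>-2)^2 * crf (gbdf3_c \<beta>) (gbdf3_c \<beta>) x \<le> (6*\<beta>^2+12*\<beta>+3)^2 * crf (gbdf3_a \<beta>) (gbdf3_a \<beta>) x"
proof -
  define sB where "sB = 3*\<beta>^4+30*\<beta>^3+57*\<beta>^2+30*\<beta>+2"
  define sA where "sA = -72*\<beta>^3-168*\<beta>^2-96*\<beta>-5"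
  have id: "(6*\<beta>^2+6*\<beta>-2)^2 * crf (gbdf3_c \<beta>) (gbdf3_c \<beta>) x - (6*\<beta>^2+12*\<beta>+3)^2 * crf (gbdf3_a \<beta>) (gbdf3_a \<beta>) x
     = sB*((x+1)*(x-1)) + sA*(x+1)/2"
    unfolding crf_def gv sA_def sB_def by (simp add: field_simps power2_eq_square power3_eq_cube power4_eq_xxxx; algebra)
  have "\<beta>^2 \<ge> 0" "\<beta>^3 \<ge> 0" "\<beta>^4 \<ge> 0" using b by simp_all
  hence "sB \<ge> 0" "sA \<le> 0" using b unfolding sA_def sB_def by linarith+
  moreover have "(x+1)*(x-1) \<le> 0" "x+1 \<ge> 0" using x by (simp_all add: mult_nonneg_nonpos)
  ultimately have "sB*((x+1)*(x-1)) \<le> 0" "sA*(x+1) \<le> 0" by (simp_all add: mult_nonneg_nonpos mult_nonpos_nonneg)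
  thus ?thesis using id by linarith
qed

lemma fact3:
  assumes b: "(\<beta>::real) \<ge> 1"
  shows "(6*\<beta>^2-4) * crf (gbdf3_a \<beta>) (gbdf3_a \<beta>) x \<le> (6*\<beta>^2+6*\<beta>-2) * crf (gbdf3_b \<beta>) (gbdf3_a \<beta>) x"
proof -
  define l0 where "l0 = 19/9 + 10/3*\<beta> - 2/3*\<beta>^2 + 2*\<beta>^3 + \<beta>^4"
  define l1 where "l1 = 7/9 + 13/3*\<beta> - 2/3*\<beta>^2 - 4*\<beta>^3 - 2*\<beta>^4"
  define l2 where "l2 = -8/9 - 5/3*\<beta> + 4/3*\<beta>^2 + 2*\<beta>^3 + \<beta>^4"
  define L where "L = (6*\<beta>^2+6*\<beta>-2) * crf (gbdf3_b \<beta>) (gbdf3_a \<beta>) x - (6*\<beta>^2-4) * crf (gbdf3_a \<beta>) (gbdf3_a \<beta>) x"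
  have idL: "L = l0 + l1*x + l2*x^2"
    unfolding L_def crf_def gv l0_def l1_def l2_def by (simp add: field_simps power2_eq_square power3_eq_cube power4_eq_xxxx; algebra)
  have idd: "l1^2 - 4*l0*l2 = 73/9 + 98/3*\<beta> + 79/3*\<beta>^2 - 44*\<beta>^3 - 52*\<beta>^4 - 24*\<beta>^5"
    unfolding l0_def l1_def l2_def by algebra
  have m0: "\<beta> \<le> \<beta>^2" using mult_right_mono[OF b, of \<beta>] b by (simp add: power2_eq_square)
  have m: "\<beta>^2 \<le> \<beta>^3" "\<beta>^3 \<le> \<beta>^4" "\<beta>^4 \<le> \<beta>^5" "1 \<le> \<beta>^2" "1 \<le> \<beta>^3"
    using b by (simp_all add: power_increasing one_le_power)
  have disc: "l1^2 - 4*l0*l2 < 0" unfolding idd using m0 m b by linarith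
  have "(\<beta>-1)^2 \<ge> 0" by simp
  hence "4*\<beta>^2 - 5*\<beta> \<ge> -1" using b by (simp add: power2_eq_square algebra_simps)
  hence l2: "l2 > 0" unfolding l2_def using m0 m b by linarith
  have "4*l2*L = (2*l2*x + l1)^2 - (l1^2 - 4*l0*l2)" unfolding idL by algebra
  also have "\<dots> > 0" using disc by (smt (verit) zero_le_power2)
  finally have "L > 0" using l2 by (simp add: zero_less_mult_iff)
  thus ?thesis unfolding L_def by simp
qed

lemma sup_att: "(t0::real) \<in> S \<Longrightarrow> f t0 = (M::real) \<Longrightarrow> (\<And>t. t\<in>S \<Longrightarrow> f t \<le> M) \<Longrightarrow> (SUP t\<in>S. f t) = M"
  by (rule cSup_eq_maximum) auto

lemma atzero: "trig_poly 3 p 0 = complex_of_real (p 0 + p 1 + p 2)"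
  unfolding trig3 by (simp add: complex_eq_iff)

lemma nsq: "(cmod (trig_poly 3 p t))^2 = crf p p (cos t)"
  unfolding cmod_power2 using cr[of p t p] by (simp add: power2_eq_square)


theorem mainTheorem7:
  fixes \<beta> :: real
  assumes "\<beta> \<ge> 1"
  shows "sigma_F 3 (gbdf3_a \<beta>) = 1 \<and>
     sigma_E 3 (gbdf3_a \<beta>) (gbdf3_c \<beta>) = (6*\<beta>^2 + 12*\<beta> + 3) / (6*\<beta>^2 + 6*\<beta> - 2) \<and>
     (6*\<beta>^2 - 4) / (6*\<beta>^2 + 6*\<beta> - 2) \<le> lambda_I 3 (gbdf3_a \<beta>) (gbdf3_b \<beta>) \<and>
     lambda_I 3 (gbdf3_a \<beta>) (gbdf3_b \<beta>) \<le> (6*\<beta>^2 - 3) / (6*\<beta>^2 + 6*\<beta> - 2) \<and>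
     (6*\<beta>^2 - 4) / (6*\<beta>^2 + 12*\<beta> + 3) \<le> I_IE 3 (gbdf3_a \<beta>) (gbdf3_b \<beta>) (gbdf3_c \<beta>) \<and>
     I_IE 3 (gbdf3_a \<beta>) (gbdf3_b \<beta>) (gbdf3_c \<beta>) \<le> (6*\<beta>^2 - 3) / (6*\<beta>^2 + 12*\<beta> + 3)"
proof -
  note b = assms
  define D where "D = 6*\<beta>^2 + 6*\<beta> - 2"
  define N where "N = 6*\<beta>^2 + 12*\<beta> + 3"
  have b2: "\<beta>^2 \<ge> 1" using b by (simp add: one_le_power)
  have Dp: "D > 0" unfolding D_def using b b2 by linarith
  have Np: "N > 0" unfolding N_def using b b2 by linarith
  let ?a = "trig_poly 3 (gbdf3_a \<beta>)"
  let ?b = "trig_poly (Suc 3) (gbdf3_b \<beta>)"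
  let ?c = "trig_poly 3 (gbdf3_c \<beta>)"
  have bb: "?b t = trig_poly 3 (gbdf3_b \<beta>) t" for t by (rule trig4) (simp add: gv)
  have a1: "cmod (?a t) \<ge> 1" for t
  proof -
    have "(cmod (?a t))^2 \<ge> 1^2" unfolding nsq using fact1[OF b] by simp
    thus ?thesis by (rule power2_le_imp_le) simp
  qed
  have apos: "cmod (?a t) > 0" for t using a1[of t] by linarith
  have a0: "?a t \<noteq> 0" for t using apos[of t] by auto
  have S: "{0..<2*pi} \<noteq> {}" "pi \<in> {0..<2*pi}" "(0::real) \<in> {0..<2*pi}" using pi_gt_zero by auto
  have api: "?a pi = complex_of_real (D/3)" unfolding atpi gv D_def by (simp add: field_simps)
  have cpi: "?c pi = complex_of_real (N/3)" unfolding atpi gv N_def by (simp add: field_simps)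
  have bpi: "?b pi = complex_of_real ((6*\<beta>^2-3)/3)" unfolding bb atpi gv by (simp add: field_simps)
  have F: "sigma_F 3 (gbdf3_a \<beta>) = 1"
    unfolding sigma_F_def
  proof (rule sup_att[OF S(3)])
    show "cmod (1 / ?a 0) = 1" unfolding atzero gv by (simp add: field_simps)
    show "cmod (1 / ?a t) \<le> 1" for t using a1[of t] by (simp add: norm_divide divide_le_eq)
  qed
  have E: "sigma_E 3 (gbdf3_a \<beta>) (gbdf3_c \<beta>) = N / D"
    unfolding sigma_E_def
  proof (rule sup_att[OF S(2)])
    show "cmod (?c pi / ?a pi) = N / D" unfolding api cpi using Dp Np by (simp add: norm_divide)
    show "cmod (?c t / ?a t) \<le> N / D" for t
    proof -
      have "(D * cmod (?c t))^2 \<le> (N * cmod (?a t))^2"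
        unfolding power_mult_distrib nsq D_def N_def using fact2[OF b] cos_ge_minus_one cos_le_one by blast
      hence "D * cmod (?c t) \<le> N * cmod (?a t)" by (rule power2_le_imp_le) (use Np in simp)
      thus ?thesis using Dp apos[of t] by (simp add: norm_divide divide_simps mult.commute)
    qed
  qed
  have Rb: "Re (?b t / ?a t) \<ge> (6*\<beta>^2-4) / D" for t
  proof -
    have e: "Re (?b t / ?a t) = crf (gbdf3_b \<beta>) (gbdf3_a \<beta>) (cos t) / crf (gbdf3_a \<beta>) (gbdf3_a \<beta>) (cos t)"
      unfolding Re_divide' bb nsq cr ..
    have p: "crf (gbdf3_a \<beta>) (gbdf3_a \<beta>) (cos t) > 0" using fact1[OF b] cos_ge_minus_one cos_le_one
      by (smt (verit))
    show ?thesis unfolding e using fact3[OF b, of "cos t"] p Dp unfolding D_def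
      by (simp add: divide_simps mult.commute)
  qed
  have bdd: "bdd_below ((\<lambda>t. Re (?b t / ?a t)) ` {0..<2*pi})"
    by (rule bdd_belowI2[where m="(6*\<beta>^2-4)/D"]) (rule Rb)
  have L1: "(6*\<beta>^2-4) / D \<le> lambda_I 3 (gbdf3_a \<beta>) (gbdf3_b \<beta>)"
    unfolding lambda_I_def by (rule cINF_greatest[OF S(1)]) (rule Rb)
  have L2: "lambda_I 3 (gbdf3_a \<beta>) (gbdf3_b \<beta>) \<le> (6*\<beta>^2-3) / D"
  proof -
    have "lambda_I 3 (gbdf3_a \<beta>) (gbdf3_b \<beta>) \<le> Re (?b pi / ?a pi)"
      unfolding lambda_I_def by (rule cINF_lower[OF bdd S(2)])
    also have "\<dots> = (6*\<beta>^2-3) / D" unfolding bpi api using Dp by (simp add: field_simps)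
    finally show ?thesis .
  qed
  have I1: "(6*\<beta>^2 - 4) / N \<le> I_IE 3 (gbdf3_a \<beta>) (gbdf3_b \<beta>) (gbdf3_c \<beta>)"
  proof -
    have "(6*\<beta>^2 - 4) / N = ((6*\<beta>^2-4) / D) / (N/D)" using Dp Np by simp
    also have "\<dots> \<le> lambda_I 3 (gbdf3_a \<beta>) (gbdf3_b \<beta>) / (N/D)"
      using L1 Dp Np by (intro divide_right_mono) auto
    finally show ?thesis unfolding I_IE_def E .
  qed
  have I2: "I_IE 3 (gbdf3_a \<beta>) (gbdf3_b \<beta>) (gbdf3_c \<beta>) \<le> (6*\<beta>^2 - 3) / N"
  proof -
    have "I_IE 3 (gbdf3_a \<beta>) (gbdf3_b \<beta>) (gbdf3_c \<beta>) \<le> ((6*\<beta>^2-3) / D) / (N/D)"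
      unfolding I_IE_def E using L2 Dp Np by (intro divide_right_mono) auto
    also have "\<dots> = (6*\<beta>^2 - 3) / N" using Dp Np by simp
    finally show ?thesis .
  qed
  show ?thesis using F E L1 L2 I1 I2 unfolding D_def N_def by auto
qed

end
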